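(* Let $l\ge2$ and $r\ge3$ be integers and let $\kappa$ be a real number with $3-l(1-\kappa)>0$. Let $n_2,\dots,n_l\ge0$ and $m_2,\dots,m_r\ge0$ be real numbers satisfying $$\sum_{s=2}^l s\,n_s=\sum_{t=2}^r t\,m_t\qquad\text{and}\qquad \sum_{t=2}^{r-1}m_t+\sum_{s=2}^l(l-s)n_s\ \ge\ \kappa l\sum_{s=2}^l n_s .$$ Then $$\sum_{t=2}^{r-1}(r-t)\,m_t\ \ge\ \Bigl(r-\frac{2+r}{3-l(1-\kappa)}\Bigr)\Bigl(\sum_{s=2}^l n_s+\sum_{t=2}^r m_t\Bigr).$$ *)

theory Defs
  imports Complex_Main
begin

end

theory Submission
  imports Defs
begin

theorem mainTheorem7:
  fixes l r :: nat and \<kappa> :: real and n m :: "nat \<Rightarrow> real"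
  assumes "l \<ge> 2" and "r \<ge> 3"
    and "3 - real l * (1 - \<kappa>) > 0"
    and "\<forall>s\<in>{2..l}. n s \<ge> 0"
    and "\<forall>t\<in>{2..r}. m t \<ge> 0"
    and "(\<Sum>s=2..l. real s * n s) = (\<Sum>t=2..r. real t * m t)"
    and "(\<Sum>t=2..r-1. m t) + (\<Sum>s=2..l. (real l - real s) * n s)
           \<ge> \<kappa> * real l * (\<Sum>s=2..l. n s)"
  shows "(\<Sum>t=2..r-1. (real r - real t) * m t)
           \<ge> (real r - (2 + real r) / (3 - real l * (1 - \<kappa>)))
              * ((\<Sum>s=2..l. n s) + (\<Sum>t=2..r. m t))"
proof -
  define N where "N = (\<Sum>s=2..l. n s)"
  define S where "S = (\<Sum>s=2..l. real s * n s)"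
  define M' where "M' = (\<Sum>t=2..r-1. m t)"
  define Sm where "Sm = (\<Sum>t=2..r-1. real t * m t)"
  define a where "a = real l * (1 - \<kappa>)"
  define D where "D = 3 - a"
  have D: "D > 0" using assms(3) by (simp add: D_def a_def)
  have rr: "r = Suc (r - 1)" using assms(2) by simp
  have split: "\<And>f::nat\<Rightarrow>real. (\<Sum>t=2..r. f t) = (\<Sum>t=2..r-1. f t) + f r"
  proof -
    fix f :: "nat \<Rightarrow> real"
    have "(\<Sum>t=2..Suc (r-1). f t) = (\<Sum>t=2..r-1. f t) + f (Suc (r-1))"
      using assms(2) by (subst sum.cl_ivl_Suc) auto
    then show "(\<Sum>t=2..r. f t) = (\<Sum>t=2..r-1. f t) + f r" using rr by metis
  qed
  define M where "M = (\<Sum>t=2..r. m t)"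
  have MM: "M = M' + m r" unfolding M_def M'_def by (rule split)
  have SS: "S = Sm + real r * m r" using assms(6) unfolding S_def Sm_def by (simp add: split)
  have mr: "m r \<ge> 0" using assms(5,2) by auto
  have N0: "N \<ge> 0" unfolding N_def using assms(4) by (intro sum_nonneg) auto
  have M'0: "M' \<ge> 0" unfolding M'_def using assms(5) by (intro sum_nonneg) auto
  have S2N: "S \<ge> 2 * N" unfolding S_def N_def sum_distrib_left
    using assms(4) by (intro sum_mono) (auto intro: mult_right_mono)
  have Sm2: "Sm \<ge> 2 * M'" unfolding Sm_def M'_def sum_distrib_left
    using assms(5) by (intro sum_mono) (auto intro: mult_right_mono)
  have h1: "(\<Sum>s=2..l. (real l - real s) * n s) = real l * N - S"
    unfolding N_def S_def by (simp add: left_diff_distrib sum_subtractf sum_distrib_left)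
  have h2: "(\<Sum>t=2..r-1. (real r - real t) * m t) = real r * M' - Sm"
    unfolding M'_def Sm_def by (simp add: left_diff_distrib sum_subtractf sum_distrib_left)
  have aN: "a * N = real l * N - \<kappa> * real l * N" by (simp add: a_def algebra_simps)
  have H: "M' \<ge> S - a * N" using assms(7) h1 aN unfolding M'_def N_def by linarith
  have G: "(2 + real r) * (N + M) \<ge> D * (real r * N + S)"
  proof (cases "a \<ge> 1")
    case True
    have "(real r - 1 + a) * (S - 2 * N) \<ge> 0" using True S2N by simp
    moreover have "(2 + real r) * (M - M') \<ge> 0" using MM mr by simp
    moreover have "(2 + real r) * (M' - S + a * N) \<ge> 0" using H by simp
    ultimately show ?thesis unfolding D_def by (simp add: algebra_simps)
  next
    case False
    have "real r * m r \<ge> 0" using mr by simp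
    then have "S \<le> 2 * a * N" using H Sm2 SS by linarith
    then have "(1 - a) * N \<le> 0" using S2N by (simp add: algebra_simps)
    then have "N = 0" using False N0 by (metis diff_gt_0_iff_gt linorder_not_le mult_pos_pos order.order_iff_strict)
    then have "S = 0" using \<open>S \<le> 2 * a * N\<close> S2N by simp
    have rm: "real r * m r \<ge> 0" using mr by simp
    have "real r * m r = 0" using \<open>S = 0\<close> Sm2 SS M'0 rm by linarith
    then have mr0: "m r = 0" using assms(2) by simp
    have "M' = 0" using \<open>S = 0\<close> Sm2 SS M'0 rm \<open>real r * m r = 0\<close> by linarith
    note this mr0
    then show ?thesis using \<open>N = 0\<close> \<open>S = 0\<close> MM by simp
  qed
  have "(real r - (2 + real r) / D) * (N + M) = real r * (N + M) - (2 + real r) * (N + M) / D"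
    by (simp add: algebra_simps)
  also have "(2 + real r) * (N + M) / D \<ge> real r * N + S"
    using G D by (simp add: pos_le_divide_eq mult.commute)
  then have "real r * (N + M) - (2 + real r) * (N + M) / D \<le> real r * M - S"
    by (simp add: algebra_simps)
  finally have "(real r - (2 + real r) / D) * (N + M) \<le> real r * M - S" .
  moreover have "real r * M - S = real r * M' - Sm" using MM SS by (simp add: algebra_simps)
  ultimately show ?thesis using h2 unfolding D_def a_def N_def M_def by simp
qed

end
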